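(* Let $F$ be a field and $L_1,\dots,L_m$ finite separable field extensions of $F$ with $[L_i:F]=n_i$. Let $n=\mathrm{lcm}(n_1,\dots,n_m)$ and $L=\prod_{i=1}^m L_i$. Let $\alpha_1,\dots,\alpha_{m-1}\in F^\times$. Then $$\Big(\alpha_1^{n/n_1},\alpha_2^{n/n_2},\dots,\alpha_{m-1}^{n/n_{m-1}},\prod_{i=1}^{m-1}\alpha_i^{-n/n_m}\Big)\in RT_{L/F}(F).$$
   Context: The multinorm torus $T_{L/F}$ is the kernel of $\prod_{i} R_{L_i/F}\mathbb{G}_m\to\mathbb{G}_m$, $(x_i)\mapsto\prod_i N_{L_i/F}(x_i)$. $RT_{L/F}(F)$ denotes the subgroup of $T_{L/F}(F)$ of elements $R$-equivalent to the identity, where $R$-equivalence is the equivalence relation generated by: $x_0\sim x_1$ if there is an $F$-rational map $f:\mathbb{P}^1\dashrightarrow T_{L/F}$ with $f(0)=x_0$ and $f(1)=x_1$. *)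

theory Defs
  imports "HOL-Combinatorics.Permutations" "HOL-Computational_Algebra.Polynomial"
          "HOL-Computational_Algebra.Fraction_Field"
begin

text \<open>All fields are realised as subfields of one ambient field (of a type class field).\<close>

definition is_subfield :: "'b::field set \<Rightarrow> bool" where
  "is_subfield S \<longleftrightarrow> 0 \<in> S \<and> 1 \<in> S \<and> (\<forall>x\<in>S. \<forall>y\<in>S. x + y \<in> S \<and> x * y \<in> S)
     \<and> (\<forall>x\<in>S. - x \<in> S) \<and> (\<forall>x\<in>S. x \<noteq> 0 \<longrightarrow> inverse x \<in> S)"

definition is_basis :: "'b::field set \<Rightarrow> 'b set \<Rightarrow> 'b list \<Rightarrow> bool" where
  "is_basis E M bs \<longleftrightarrow> set bs \<subseteq> M
     \<and> (\<forall>c. (\<forall>i<length bs. c i \<in> E) \<and> (\<Sum>i<length bs. c i * bs ! i) = 0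
            \<longrightarrow> (\<forall>i<length bs. c i = 0))
     \<and> (\<forall>y\<in>M. \<exists>c. (\<forall>i<length bs. c i \<in> E) \<and> y = (\<Sum>i<length bs. c i * bs ! i))"

definition finite_ext :: "'b::field set \<Rightarrow> 'b set \<Rightarrow> bool" where
  "finite_ext E M \<longleftrightarrow> (\<exists>bs. is_basis E M bs)"

definition ext_degree :: "'b::field set \<Rightarrow> 'b set \<Rightarrow> nat" where
  "ext_degree E M = (LEAST k. \<exists>bs. is_basis E M bs \<and> length bs = k)"

definition separable_ext :: "'b::field set \<Rightarrow> 'b set \<Rightarrow> bool" where
  "separable_ext E M \<longleftrightarrow> (\<forall>x\<in>M. \<exists>p. p \<noteq> 0 \<and> (\<forall>i. coeff p i \<in> E) \<and> poly p x = 0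
       \<and> (\<exists>a b. a * p + b * pderiv p = 1))"

text \<open>Norm N_{M/E}(x): determinant of multiplication by x w.r.t. an E-basis of M
  (Leibniz formula).\<close>
definition field_norm :: "'b::field set \<Rightarrow> 'b set \<Rightarrow> 'b \<Rightarrow> 'b" where
  "field_norm E M x = (SOME d. \<exists>bs c. is_basis E M bs \<and> (\<forall>i j. c i j \<in> E)
      \<and> (\<forall>j<length bs. x * bs ! j = (\<Sum>i<length bs. c i j * bs ! i))
      \<and> d = (\<Sum>p | p permutes {..<length bs}.
               of_int (sign p) * (\<Prod>i<length bs. c i (p i))))"

text \<open>For subfields F \<subseteq> S of the ambient field K, the subfield
  S(t) = S \<otimes>_F F(t) = { p/q : p \<in> S[t], q \<in> F[t], q \<noteq> 0 } of K(t).\<close>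
definition ratext :: "'k::field set \<Rightarrow> 'k set \<Rightarrow> 'k poly fract set" where
  "ratext F S = {Fract p q | p q. (\<forall>i. coeff p i \<in> S) \<and> (\<forall>i. coeff q i \<in> F) \<and> q \<noteq> 0}"

text \<open>F-points of the multinorm torus T_{L/F}, L = L_0 \<times> ... \<times> L_{m-1};
  tuples are functions nat \<Rightarrow> 'k, normalised to 1 outside {..<m}.\<close>
definition torus_pts :: "'k::field set \<Rightarrow> (nat \<Rightarrow> 'k set) \<Rightarrow> nat \<Rightarrow> (nat \<Rightarrow> 'k) set" where
  "torus_pts F L m = {x. (\<forall>i<m. x i \<in> L i \<and> x i \<noteq> 0)
      \<and> (\<Prod>i<m. field_norm F (L i) (x i)) = 1 \<and> (\<forall>i\<ge>m. x i = 1)}"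

text \<open>Elementary R-link: x = f(0), y = f(1) for an F-rational map f : P^1 \<dashrightarrow> T_{L/F}
  defined at 0 and 1. Such f is given by f_i = P_i/q with P_i \<in> L_i[t], q \<in> F[t],
  q(0), q(1) \<noteq> 0, and f(generic point) \<in> T, i.e. \<Prod> N_{L_i(t)/F(t)}(f_i) = 1.\<close>
definition R_step :: "'k::field set \<Rightarrow> (nat \<Rightarrow> 'k set) \<Rightarrow> nat \<Rightarrow> (nat \<Rightarrow> 'k) \<Rightarrow> (nat \<Rightarrow> 'k) \<Rightarrow> bool" where
  "R_step F L m x y \<longleftrightarrow> (\<exists>P q. (\<forall>i<m. \<forall>k. coeff (P i) k \<in> L i) \<and> (\<forall>k. coeff q k \<in> F)
      \<and> poly q 0 \<noteq> 0 \<and> poly q 1 \<noteq> 0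
      \<and> (\<Prod>i<m. field_norm (ratext F F) (ratext F (L i)) (Fract (P i) q)) = 1
      \<and> (\<forall>i<m. x i = poly (P i) 0 / poly q 0 \<and> y i = poly (P i) 1 / poly q 1)
      \<and> (\<forall>i\<ge>m. x i = 1 \<and> y i = 1))"

definition RT_pts :: "'k::field set \<Rightarrow> (nat \<Rightarrow> 'k set) \<Rightarrow> nat \<Rightarrow> (nat \<Rightarrow> 'k) set" where
  "RT_pts F L m = {x \<in> torus_pts F L m. equivclp (R_step F L m) (\<lambda>_. 1) x}"

end

theory Submission
  imports Defs
begin


lemma subf_inv: "is_subfield E \<Longrightarrow> x \<in> E \<Longrightarrow> inverse x \<in> E"
  unfolding is_subfield_def by (cases "x = 0") auto

lemma subf_simps:
  assumes "is_subfield E"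
  shows "0 \<in> E" "1 \<in> E" "x \<in> E \<Longrightarrow> y \<in> E \<Longrightarrow> x + y \<in> E"
    "x \<in> E \<Longrightarrow> y \<in> E \<Longrightarrow> x * y \<in> E" "x \<in> E \<Longrightarrow> - x \<in> E"
    "x \<in> E \<Longrightarrow> inverse x \<in> E"
  using assms subf_inv unfolding is_subfield_def by auto

lemma subf_diff: "is_subfield E \<Longrightarrow> x \<in> E \<Longrightarrow> y \<in> E \<Longrightarrow> x - y \<in> E"
  by (metis diff_conv_add_uminus subf_simps(3,5))

lemma subf_divide: "is_subfield E \<Longrightarrow> x \<in> E \<Longrightarrow> y \<in> E \<Longrightarrow> x / y \<in> E"
  by (metis divide_inverse subf_simps(4,6))

lemma subf_sum: "is_subfield E \<Longrightarrow> (\<forall>x\<in>S. f x \<in> E) \<Longrightarrow> sum f S \<in> E"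
  by (induction S rule: infinite_finite_induct) (auto simp: subf_simps)

lemma subf_prod: "is_subfield E \<Longrightarrow> (\<forall>x\<in>S. f x \<in> E) \<Longrightarrow> prod f S \<in> E"
  by (induction S rule: infinite_finite_induct) (auto simp: subf_simps)

lemma subf_power: "is_subfield E \<Longrightarrow> x \<in> E \<Longrightarrow> x ^ k \<in> E"
  by (induction k) (auto simp: subf_simps)

lemma steinitz:
  fixes b v :: "nat \<Rightarrow> 'b::field"
  assumes E: "is_subfield E" and J: "finite J"
  shows "finite I \<Longrightarrow> card J < card I \<Longrightarrow>
    (\<forall>i\<in>I. \<exists>a. (\<forall>j\<in>J. a j \<in> E) \<and> v i = (\<Sum>j\<in>J. a j * b j)) \<Longrightarrow>
    \<exists>c. (\<forall>i\<in>I. c i \<in> E) \<and> (\<Sum>i\<in>I. c i * v i) = 0 \<and> (\<exists>i\<in>I. c i \<noteq> 0)"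
  using J
proof (induction J arbitrary: I v rule: finite_induct)
  case empty
  then obtain i0 where i0: "i0 \<in> I" by fastforce
  show ?case
    apply (rule exI[of _ "\<lambda>i. if i = i0 then 1 else 0"])
    using empty i0 by (auto simp: subf_simps[OF E])
next
  case (insert j0 J)
  from insert.prems(3) obtain A where A: "\<forall>i\<in>I. (\<forall>j\<in>insert j0 J. A i j \<in> E) \<and> v i = (\<Sum>j\<in>insert j0 J. A i j * b j)"
    by metis
  have vi: "v i = A i j0 * b j0 + (\<Sum>j\<in>J. A i j * b j)" if "i \<in> I" for i
    using A that insert.hyps by auto
  show ?case
  proof (cases "\<forall>i\<in>I. A i j0 = 0")
    case True
    show ?thesis
    proof (rule insert.IH[OF insert.prems(1)])
      show "card J < card I" using insert.prems(2) insert.hyps by simp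
      show "\<forall>i\<in>I. \<exists>a. (\<forall>j\<in>J. a j \<in> E) \<and> v i = (\<Sum>j\<in>J. a j * b j)"
      proof
        fix i assume i: "i \<in> I"
        show "\<exists>a. (\<forall>j\<in>J. a j \<in> E) \<and> v i = (\<Sum>j\<in>J. a j * b j)"
          by (rule exI[of _ "A i"]) (use A vi[OF i] True i in simp)
      qed
    qed
  next
    case False
    then obtain k where k: "k \<in> I" "A k j0 \<noteq> 0" by blast
    define I' where "I' = I - {k}"
    define u where "u i = v i - (A i j0 / A k j0) * v k" for i
    have cI': "card I' = card I - 1" using k insert.prems(1) by (simp add: I'_def)
    have "\<exists>d. (\<forall>i\<in>I'. d i \<in> E) \<and> (\<Sum>i\<in>I'. d i * u i) = 0 \<and> (\<exists>i\<in>I'. d i \<noteq> 0)"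
    proof (rule insert.IH)
      show "finite I'" using insert.prems(1) by (simp add: I'_def)
      show "card J < card I'" using insert.prems(2) insert.hyps cI' by simp
      show "\<forall>i\<in>I'. \<exists>a. (\<forall>j\<in>J. a j \<in> E) \<and> u i = (\<Sum>j\<in>J. a j * b j)"
      proof
        fix i assume i: "i \<in> I'"
        hence iI: "i \<in> I" by (simp add: I'_def)
        let ?a = "\<lambda>j. A i j - (A i j0 / A k j0) * A k j"
        have "u i = (\<Sum>j\<in>J. ?a j * b j)"
          unfolding u_def vi[OF iI] vi[OF k(1)]
          using k(2) by (simp add: algebra_simps sum_subtractf sum_distrib_left)
        moreover have "\<forall>j\<in>J. ?a j \<in> E"
          using A iI k(1) by (auto intro!: subf_diff[OF E] subf_simps(4)[OF E] subf_divide[OF E])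
        ultimately show "\<exists>a. (\<forall>j\<in>J. a j \<in> E) \<and> u i = (\<Sum>j\<in>J. a j * b j)"
          by (intro exI[of _ ?a] conjI) auto
      qed
    qed
    then obtain d where d: "\<forall>i\<in>I'. d i \<in> E" "(\<Sum>i\<in>I'. d i * u i) = 0" "\<exists>i\<in>I'. d i \<noteq> 0"
      by blast
    define c where "c i = (if i = k then - (\<Sum>i\<in>I'. d i * (A i j0 / A k j0)) else d i)" for i
    have Ieq: "I = insert k I'" using k by (auto simp: I'_def)
    have kI': "k \<notin> I'" by (simp add: I'_def)
    have fI': "finite I'" using insert.prems(1) by (simp add: I'_def)
    have "(\<Sum>i\<in>I. c i * v i) = c k * v k + (\<Sum>i\<in>I'. d i * v i)"
      unfolding Ieq using kI' fI' by (auto simp: c_def intro!: sum.cong)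
    also have "\<dots> = (\<Sum>i\<in>I'. d i * u i)"
      unfolding c_def u_def by (simp add: algebra_simps sum_subtractf sum_distrib_left sum_distrib_right)
    finally have "(\<Sum>i\<in>I. c i * v i) = 0" using d(2) by simp
    moreover have "\<forall>i\<in>I. c i \<in> E"
      using d(1) A k by (auto simp: c_def Ieq intro!: subf_simps(5)[OF E] subf_sum[OF E]
          subf_simps(4)[OF E] subf_divide[OF E])
    moreover have "\<exists>i\<in>I. c i \<noteq> 0" using d(3) kI' Ieq by (auto simp: c_def)
    ultimately show ?thesis by blast
  qed
qed


lemma basis_len_le:
  assumes E: "is_subfield E" and B: "is_basis E M bs" and C: "is_basis E M cs"
  shows "length cs \<le> length bs"
proof (rule ccontr)
  assume "\<not> ?thesis"
  hence lt: "card {..<length bs} < card {..<length cs}" by simp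
  have "\<forall>i\<in>{..<length cs}. \<exists>a. (\<forall>j\<in>{..<length bs}. a j \<in> E) \<and> cs ! i = (\<Sum>j\<in>{..<length bs}. a j * bs ! j)"
  proof
    fix i assume "i \<in> {..<length cs}"
    hence "cs ! i \<in> M" using C unfolding is_basis_def by (auto simp: subset_iff)
    then obtain a where "\<forall>j<length bs. a j \<in> E" "cs ! i = (\<Sum>j<length bs. a j * bs ! j)"
      using B unfolding is_basis_def by blast
    thus "\<exists>a. (\<forall>j\<in>{..<length bs}. a j \<in> E) \<and> cs ! i = (\<Sum>j\<in>{..<length bs}. a j * bs ! j)"
      by auto
  qed
  from steinitz[OF E _ _ lt this] obtain c where
    c: "\<forall>i\<in>{..<length cs}. c i \<in> E" "(\<Sum>i\<in>{..<length cs}. c i * cs ! i) = 0"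
       "\<exists>i\<in>{..<length cs}. c i \<noteq> 0" by auto
  thus False using C unfolding is_basis_def by auto
qed

lemma ext_degree_eq:
  assumes E: "is_subfield E" and B: "is_basis E M bs"
  shows "ext_degree E M = length bs"
  unfolding ext_degree_def
proof (rule Least_equality)
  show "\<exists>bsa. is_basis E M bsa \<and> length bsa = length bs" using B by blast
  fix y assume "\<exists>bsa. is_basis E M bsa \<and> length bsa = y"
  then obtain cs where "is_basis E M cs" "length cs = y" by blast
  thus "length bs \<le> y" using basis_len_le[OF E] B by blast
qed

lemma norm_const:
  assumes E: "is_subfield E" and B: "is_basis E M bs" and cE: "c \<in> E"
  shows "field_norm E M c = c ^ length bs"
proof -
  define P where "P d = (\<exists>bs c'. is_basis E M bs \<and> (\<forall>i j. c' i j \<in> E)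
      \<and> (\<forall>j<length bs. c * bs ! j = (\<Sum>i<length bs. c' i j * bs ! i))
      \<and> d = (\<Sum>p | p permutes {..<length bs}.
               of_int (sign p) * (\<Prod>i<length bs. c' i (p i))))" for d
  have fn: "field_norm E M c = (SOME d. P d)" unfolding field_norm_def P_def by simp
  have ex: "\<exists>d. P d"
  proof -
    let ?C = "\<lambda>i j. if i = j then c else 0"
    have "\<forall>i j. ?C i j \<in> E" using cE subf_simps(1)[OF E] by auto
    moreover have "\<forall>j<length bs. c * bs ! j = (\<Sum>i<length bs. ?C i j * bs ! i)"
    proof (intro allI impI)
      fix j assume j: "j < length bs"
      have "(\<Sum>i<length bs. ?C i j * bs ! i) = (\<Sum>i<length bs. if i = j then c * bs ! j else 0)"
        by (rule sum.cong) auto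
      thus "c * bs ! j = (\<Sum>i<length bs. ?C i j * bs ! i)" using j by simp
    qed
    ultimately show ?thesis unfolding P_def using B
      by (intro exI[of _ "\<Sum>p | p permutes {..<length bs}. of_int (sign p) * (\<Prod>i<length bs. ?C i (p i))"]
          exI[of _ bs] exI[of _ ?C]) simp
  qed
  have uniq: "d = c ^ length bs" if "P d" for d
  proof -
    from that obtain bs' C where B': "is_basis E M bs'" and CE: "\<forall>i j. C i j \<in> E"
      and Ceq: "\<forall>j<length bs'. c * bs' ! j = (\<Sum>i<length bs'. C i j * bs' ! i)"
      and d: "d = (\<Sum>p | p permutes {..<length bs'}. of_int (sign p) * (\<Prod>i<length bs'. C i (p i)))"
      unfolding P_def by blast
    have len: "length bs' = length bs"
      using basis_len_le[OF E B B'] basis_len_le[OF E B' B] by simp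
    have Cv: "C i j = (if i = j then c else 0)" if j: "j < length bs'" and i: "i < length bs'" for i j
    proof -
      let ?g = "\<lambda>i. C i j - (if i = j then c else 0)"
      have "\<forall>i<length bs'. ?g i \<in> E"
        using CE cE subf_simps(1)[OF E] by (auto intro!: subf_diff[OF E])
      moreover have "(\<Sum>i<length bs'. ?g i * bs' ! i) = 0"
      proof -
        have "(\<Sum>i<length bs'. ?g i * bs' ! i) = (\<Sum>i<length bs'. C i j * bs' ! i)
            - (\<Sum>i<length bs'. (if i = j then c else 0) * bs' ! i)"
          by (simp add: sum_subtractf left_diff_distrib)
        also have "(\<Sum>i<length bs'. (if i = j then c else 0) * bs' ! i)
            = (\<Sum>i<length bs'. if i = j then c * bs' ! j else 0)"
          by (rule sum.cong) auto
        also have "\<dots> = c * bs' ! j" using j by simp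
        finally show ?thesis using Ceq j by simp
      qed
      moreover have indep: "\<forall>c. (\<forall>i<length bs'. c i \<in> E) \<and> (\<Sum>i<length bs'. c i * bs' ! i) = 0
            \<longrightarrow> (\<forall>i<length bs'. c i = 0)" using B' unfolding is_basis_def by blast
      ultimately have "\<forall>i<length bs'. ?g i = 0" using spec[OF indep, of ?g] by blast
      thus ?thesis using i by auto
    qed
    let ?S = "{p. p permutes {..<length bs'}}"
    let ?f = "\<lambda>p. of_int (sign p) * (\<Prod>i<length bs'. C i (p i))"
    have fin: "finite ?S" by (simp add: finite_permutations)
    have idS: "id \<in> ?S" by (simp add: permutes_id)
    have zero: "?f p = 0" if "p \<in> ?S - {id}" for p
    proof -
      from that have pp: "p permutes {..<length bs'}" and "p \<noteq> id" by auto
      then obtain i where pi: "p i \<noteq> i" by (metis eq_id_iff)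
      hence ilt: "i < length bs'" using pp by (meson lessThan_iff permutes_not_in)
      hence "p i < length bs'" using pp by (metis lessThan_iff permutes_in_image)
      hence "C i (p i) = 0" using Cv ilt pi by simp
      hence "(\<Prod>i<length bs'. C i (p i)) = 0" using ilt by (intro prod_zero) auto
      thus ?thesis by simp
    qed
    have "d = ?f id + sum ?f (?S - {id})" unfolding d by (rule sum.remove[OF fin idS])
    also have "sum ?f (?S - {id}) = 0" using zero by (intro sum.neutral) blast
    also have "?f id = (\<Prod>i<length bs'. c)" by (simp add: sign_id Cv)
    finally show ?thesis using len by simp
  qed
  show ?thesis unfolding fn using someI_ex[OF ex] uniq by blast
qed


definition pc :: "'k::field set \<Rightarrow> 'k poly \<Rightarrow> bool" where
  "pc S p \<longleftrightarrow> (\<forall>i. coeff p i \<in> S)"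

lemma pc_0: "is_subfield S \<Longrightarrow> pc S 0"
  by (simp add: pc_def subf_simps)

lemma pc_const: "is_subfield S \<Longrightarrow> c \<in> S \<Longrightarrow> pc S [:c:]"
  by (simp add: pc_def subf_simps coeff_pCons split: nat.split)

lemma pc_1: "is_subfield S \<Longrightarrow> pc S 1"
  using pc_const[of S 1] by (simp add: subf_simps one_pCons)

lemma pc_lin: "is_subfield S \<Longrightarrow> a \<in> S \<Longrightarrow> b \<in> S \<Longrightarrow> pc S [:a, b:]"
  by (simp add: pc_def subf_simps coeff_pCons split: nat.split)

lemma pc_add: "is_subfield S \<Longrightarrow> pc S p \<Longrightarrow> pc S q \<Longrightarrow> pc S (p + q)"
  by (simp add: pc_def subf_simps)

lemma pc_uminus: "is_subfield S \<Longrightarrow> pc S p \<Longrightarrow> pc S (- p)"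
  by (simp add: pc_def subf_simps)

lemma pc_mult: "is_subfield S \<Longrightarrow> pc S p \<Longrightarrow> pc S q \<Longrightarrow> pc S (p * q)"
  unfolding pc_def coeff_mult by (auto intro!: subf_sum subf_simps(4))

lemma pc_power: "is_subfield S \<Longrightarrow> pc S p \<Longrightarrow> pc S (p ^ k)"
  by (induction k) (auto intro: pc_1 pc_mult)

lemma pc_prod: "is_subfield S \<Longrightarrow> (\<forall>x\<in>I. pc S (f x)) \<Longrightarrow> pc S (prod f I)"
  by (induction I rule: infinite_finite_induct) (auto intro: pc_1 pc_mult)

lemma pc_mono: "F \<subseteq> S \<Longrightarrow> pc F p \<Longrightarrow> pc S p"
  by (auto simp: pc_def)

lemma ratext_iff: "y \<in> ratext F S \<longleftrightarrow> (\<exists>p q. y = Fract p q \<and> pc S p \<and> pc F q \<and> q \<noteq> 0)"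
  unfolding ratext_def pc_def by blast

lemma ratext_subfield:
  assumes F: "is_subfield F"
  shows "is_subfield (ratext F F)"
  unfolding is_subfield_def
proof (intro conjI ballI)
  show "0 \<in> ratext F F" unfolding ratext_iff
    by (rule exI[of _ 0], rule exI[of _ 1]) (simp add: Zero_fract_def pc_0 pc_1 F)
  show "1 \<in> ratext F F" unfolding ratext_iff
    by (rule exI[of _ 1], rule exI[of _ 1]) (simp add: One_fract_def pc_1 F)
  fix x assume "x \<in> ratext F F"
  then obtain a b where x: "x = Fract a b" "pc F a" "pc F b" "b \<noteq> 0" unfolding ratext_iff by blast
  show "- x \<in> ratext F F" unfolding ratext_iff using x
    by (intro exI[of _ "- a"] exI[of _ b]) (simp add: pc_uminus F)
  show "x \<noteq> 0 \<longrightarrow> inverse x \<in> ratext F F"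
  proof
    assume "x \<noteq> 0"
    hence "a \<noteq> 0" using x by (auto simp: fract_collapse)
    thus "inverse x \<in> ratext F F" unfolding ratext_iff using x
      by (intro exI[of _ b] exI[of _ a]) simp
  qed
  fix y assume "y \<in> ratext F F"
  then obtain c d where y: "y = Fract c d" "pc F c" "pc F d" "d \<noteq> 0" unfolding ratext_iff by blast
  show "x + y \<in> ratext F F" unfolding ratext_iff using x y
    by (intro exI[of _ "a * d + c * b"] exI[of _ "b * d"]) (simp add: pc_add pc_mult F)
  show "x * y \<in> ratext F F" unfolding ratext_iff using x y
    by (intro exI[of _ "a * c"] exI[of _ "b * d"]) (simp add: pc_mult F)
qed

lemma common_denom:
  assumes F: "is_subfield F" and S: "is_subfield S" and FS: "F \<subseteq> S" and I: "finite I"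
  shows "(\<forall>i\<in>I. c i \<in> ratext F S) \<Longrightarrow> \<exists>Q p. Q \<noteq> 0 \<and> pc F Q \<and> (\<forall>i\<in>I. pc S (p i) \<and> c i = Fract (p i) Q)"
  using I
proof (induction I rule: finite_induct)
  case empty
  show ?case by (intro exI[of _ 1]) (simp add: pc_1 F)
next
  case (insert x I)
  then obtain Q p where Q: "Q \<noteq> 0" "pc F Q" "\<forall>i\<in>I. pc S (p i) \<and> c i = Fract (p i) Q" by auto
  from insert.prems obtain a b where ab: "c x = Fract a b" "pc S a" "pc F b" "b \<noteq> 0"
    unfolding ratext_iff by blast
  define p' where "p' i = (if i = x then a * Q else p i * b)" for i
  have "\<forall>i\<in>insert x I. pc S (p' i) \<and> c i = Fract (p' i) (Q * b)"
  proof
    fix i assume i: "i \<in> insert x I"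
    show "pc S (p' i) \<and> c i = Fract (p' i) (Q * b)"
    proof (cases "i = x")
      case True
      thus ?thesis using ab Q FS by (simp add: p'_def pc_mult pc_mono S)
          (metis mult.commute mult_fract_cancel)
    next
      case False
      hence "i \<in> I" using i by simp
      thus ?thesis using False ab Q FS by (simp add: p'_def pc_mult pc_mono S)
          (metis mult.commute mult_fract_cancel)
    qed
  qed
  moreover have "Q * b \<noteq> 0" "pc F (Q * b)" using Q ab by (auto simp: pc_mult F)
  ultimately show ?case by blast
qed

lemma fract_sum: "(Q::'a::idom) \<noteq> 0 \<Longrightarrow> (\<Sum>i\<in>I. Fract (f i) Q) = Fract (sum f I) Q"
proof (induction I rule: infinite_finite_induct)
  case (infinite A) thus ?case by (simp add: fract_collapse)
next
  case empty thus ?case by (simp add: fract_collapse)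
next
  case (insert x I)
  hence "(\<Sum>i\<in>insert x I. Fract (f i) Q) = Fract (f x) Q + Fract (sum f I) Q" by simp
  also have "\<dots> = Fract ((f x + sum f I) * Q) (Q * Q)" using insert by (simp add: algebra_simps)
  also have "\<dots> = Fract (f x + sum f I) Q" by (metis mult.commute mult_fract_cancel insert.prems)
  finally show ?case using insert by simp
qed

lemma fract_eq_0: "(Q::'a::idom) \<noteq> 0 \<Longrightarrow> Fract P Q = 0 \<longleftrightarrow> P = 0"
  by (simp add: Zero_fract_def eq_fract)


lemma coeff_mult_const_right: "coeff (p * [:b:]) n = coeff p n * b"
  by (simp add: mult.commute)

lemma ratext_basis:
  fixes F S :: "'k::field set"
  assumes F: "is_subfield F" and S: "is_subfield S" and FS: "F \<subseteq> S" and B: "is_basis F S bs"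
  shows "is_basis (ratext F F) (ratext F S) (map (\<lambda>b. Fract [:b:] 1) bs)"
proof -
  let ?k = "length bs"
  let ?B = "\<lambda>i. Fract [:bs ! i:] (1::'k poly)"
  have Bset: "set bs \<subseteq> S" and Bind: "\<forall>c. (\<forall>i<?k. c i \<in> F) \<and> (\<Sum>i<?k. c i * bs ! i) = 0
            \<longrightarrow> (\<forall>i<?k. c i = 0)"
    and Bspan: "\<forall>y\<in>S. \<exists>c. (\<forall>i<?k. c i \<in> F) \<and> y = (\<Sum>i<?k. c i * bs ! i)"
    using B unfolding is_basis_def by blast+
  have part1: "set (map (\<lambda>b. Fract [:b:] 1) bs) \<subseteq> ratext F S"
  proof
    fix y assume "y \<in> set (map (\<lambda>b. Fract [:b:] (1::'k poly)) bs)"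
    then obtain b where "b \<in> set bs" "y = Fract [:b:] 1" by auto
    thus "y \<in> ratext F S" unfolding ratext_iff using Bset
      by (intro exI[of _ "[:b:]"] exI[of _ 1]) (auto simp: pc_const pc_1 S F)
  qed
  have part2: "\<forall>i<?k. c i = 0" if cE: "\<forall>i<?k. c i \<in> ratext F F"
      and c0: "(\<Sum>i<?k. c i * ?B i) = 0" for c
  proof -
    obtain Q p where Q: "Q \<noteq> 0" "pc F Q" and p: "\<forall>i\<in>{..<?k}. pc F (p i) \<and> c i = Fract (p i) Q"
      using common_denom[OF F F subset_refl finite_lessThan[of ?k], where c=c] cE by auto
    have "(\<Sum>i<?k. c i * ?B i) = (\<Sum>i<?k. Fract (p i * [:bs ! i:]) Q)"
      using p by (intro sum.cong) auto
    also have "\<dots> = Fract (\<Sum>i<?k. p i * [:bs ! i:]) Q" by (rule fract_sum[OF Q(1)])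
    finally have "(\<Sum>i<?k. p i * [:bs ! i:]) = 0" using c0 fract_eq_0[OF Q(1)] by simp
    hence co: "(\<Sum>i<?k. coeff (p i) n * bs ! i) = 0" for n
    proof -
      assume h: "(\<Sum>i<?k. p i * [:bs ! i:]) = 0"
      have "coeff (\<Sum>i<?k. p i * [:bs ! i:]) n = (\<Sum>i<?k. coeff (p i) n * bs ! i)"
        unfolding coeff_sum coeff_mult_const_right ..
      thus ?thesis using h by simp
    qed
    have "\<forall>i<?k. coeff (p i) n = 0" for n
      using spec[OF Bind, of "\<lambda>i. coeff (p i) n"] co p unfolding pc_def by auto
    hence "\<forall>i<?k. p i = 0" by (auto simp: poly_eq_iff)
    thus ?thesis using p by (auto simp: fract_collapse)
  qed
  have part3: "\<exists>c. (\<forall>i<?k. c i \<in> ratext F F) \<and> y = (\<Sum>i<?k. c i * ?B i)" if y: "y \<in> ratext F S" for y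
  proof -
    obtain P q where Pq: "y = Fract P q" "pc S P" "pc F q" "q \<noteq> 0" using y unfolding ratext_iff by blast
    have "\<forall>n. \<exists>a. (\<forall>i<?k. a i \<in> F) \<and> coeff P n = (\<Sum>i<?k. a i * bs ! i) \<and> (coeff P n = 0 \<longrightarrow> a = (\<lambda>_. 0))"
    proof
      fix n
      show "\<exists>a. (\<forall>i<?k. a i \<in> F) \<and> coeff P n = (\<Sum>i<?k. a i * bs ! i) \<and> (coeff P n = 0 \<longrightarrow> a = (\<lambda>_. 0))"
      proof (cases "coeff P n = 0")
        case True thus ?thesis using subf_simps(1)[OF F] by (intro exI[of _ "\<lambda>_. 0"]) auto
      next
        case False
        have "coeff P n \<in> S" using Pq unfolding pc_def by auto
        then obtain a where "\<forall>i<?k. a i \<in> F" "coeff P n = (\<Sum>i<?k. a i * bs ! i)" using Bspan by blast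
        thus ?thesis using False by blast
      qed
    qed
    then obtain A where A: "\<forall>n. (\<forall>i<?k. A n i \<in> F) \<and> coeff P n = (\<Sum>i<?k. A n i * bs ! i) \<and> (coeff P n = 0 \<longrightarrow> A n = (\<lambda>_. 0))"
      by metis
    define p where "p i = (\<Sum>n\<le>degree P. monom (A n i) n)" for i
    have cp: "coeff (p i) n = (if n \<le> degree P then A n i else 0)" for i n
      unfolding p_def coeff_sum coeff_monom by (simp add: sum.delta)
    have pF: "pc F (p i)" if "i < ?k" for i using A that subf_simps(1)[OF F] unfolding pc_def cp by auto
    have Peq: "P = (\<Sum>i<?k. p i * [:bs ! i:])"
    proof (rule poly_eqI)
      fix n
      show "coeff P n = coeff (\<Sum>i<?k. p i * [:bs ! i:]) n"
      proof (cases "n \<le> degree P")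
        case True thus ?thesis using A by (simp add: coeff_sum coeff_mult_const_right cp mult.commute)
      next
        case False
        hence "coeff P n = 0" by (simp add: coeff_eq_0)
        thus ?thesis using False by (simp add: coeff_sum coeff_mult_const_right cp)
      qed
    qed
    have "y = Fract (\<Sum>i<?k. p i * [:bs ! i:]) q" using Pq Peq by simp
    also have "\<dots> = (\<Sum>i<?k. Fract (p i * [:bs ! i:]) q)" by (rule fract_sum[OF Pq(4), symmetric])
    also have "\<dots> = (\<Sum>i<?k. Fract (p i) q * ?B i)" by simp
    finally have yeq: "y = (\<Sum>i<?k. Fract (p i) q * ?B i)" .
    have "\<forall>i<?k. Fract (p i) q \<in> ratext F F" using pF Pq unfolding ratext_iff by blast
    with yeq show ?thesis by (intro exI[of _ "\<lambda>i. Fract (p i) q"]) simp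
  qed
  let ?bs = "map (\<lambda>b. Fract [:b:] (1::'k poly)) bs"
  have seq: "(\<Sum>i<length ?bs. c i * ?bs ! i) = (\<Sum>i<?k. c i * ?B i)" for c
    by (intro sum.cong) auto
  show ?thesis unfolding is_basis_def seq
  proof (intro conjI)
    show "set ?bs \<subseteq> ratext F S" by (rule part1)
    show "\<forall>c. (\<forall>i<length ?bs. c i \<in> ratext F F) \<and> (\<Sum>i<?k. c i * ?B i) = 0 \<longrightarrow> (\<forall>i<length ?bs. c i = 0)"
      using part2 by simp
    show "\<forall>y\<in>ratext F S. \<exists>c. (\<forall>i<length ?bs. c i \<in> ratext F F) \<and> y = (\<Sum>i<?k. c i * ?B i)"
      using part3 by simp
  qed
qed


lemma r_into_equivclp': "r x y \<Longrightarrow> equivclp r x y"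
  unfolding equivclp_def symclp_def by (rule r_into_rtranclp) simp

lemma fract_power: "Fract ((a::'a::idom) ^ k) 1 = Fract a 1 ^ k"
proof (induction k)
  case 0 show ?case by (simp add: fract_collapse)
next
  case (Suc k)
  have "Fract (a ^ Suc k) 1 = Fract a 1 * Fract (a ^ k) 1" by simp
  thus ?case using Suc by simp
qed

lemma fract_prod: "Fract (prod (f::_ \<Rightarrow> 'a::idom) I) 1 = (\<Prod>i\<in>I. Fract (f i) 1)"
proof (induction I rule: infinite_finite_induct)
  case (infinite A) thus ?case by (simp add: fract_collapse)
next
  case empty thus ?case by (simp add: fract_collapse)
next
  case (insert x I)
  have h: "Fract (prod f (insert x I)) 1 = Fract (f x) 1 * Fract (prod f I) 1" using insert.hyps by simp
  also have "\<dots> = Fract (f x) 1 * (\<Prod>i\<in>I. Fract (f i) 1)" by (simp only: insert.IH)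
  also have "\<dots> = (\<Prod>i\<in>insert x I. Fract (f i) 1)" using insert.hyps by simp
  finally show ?case .
qed

lemma fract_cancel_right: "(q::'a::idom) \<noteq> 0 \<Longrightarrow> Fract (a * q) q = Fract a 1"
  by (simp add: eq_fract)

lemma prod_cancel:
  fixes G :: "nat \<Rightarrow> 'a::field"
  assumes G: "\<forall>j<k. G j \<noteq> 0" and ed: "\<forall>i\<le>k. e i * d i = n"
  shows "(\<Prod>i<k. (G i ^ e i) ^ d i) * (inverse (\<Prod>j<k. G j ^ e k)) ^ d k = 1"
proof -
  have "(\<Prod>i<k. (G i ^ e i) ^ d i) = (\<Prod>i<k. G i ^ n)"
    using ed by (intro prod.cong) (auto simp: power_mult[symmetric])
  moreover have "(inverse (\<Prod>j<k. G j ^ e k)) ^ d k = inverse (\<Prod>j<k. G j ^ n)"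
    using ed by (simp add: power_inverse prod_power_distrib power_mult[symmetric])
  moreover have "(\<Prod>j<k. G j ^ n) \<noteq> 0" using G by simp
  ultimately show ?thesis by simp
qed

theorem mainTheorem20:
  fixes F :: "'k::field set" and L :: "nat \<Rightarrow> 'k set" and m :: nat and \<alpha> :: "nat \<Rightarrow> 'k"
  assumes "is_subfield F"
    and "m \<ge> 1"
    and "\<forall>i<m. is_subfield (L i) \<and> F \<subseteq> L i \<and> finite_ext F (L i) \<and> separable_ext F (L i)"
    and "\<forall>i<m - 1. \<alpha> i \<in> F \<and> \<alpha> i \<noteq> 0"
  defines "n \<equiv> Lcm ((\<lambda>i. ext_degree F (L i)) ` {..<m})"
  shows "(\<lambda>i. if i < m - 1 then \<alpha> i ^ (n div ext_degree F (L i))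
             else if i = m - 1 then inverse (\<Prod>j<m - 1. \<alpha> j ^ (n div ext_degree F (L (m - 1))))
             else 1) \<in> RT_pts F L m"
proof -
  note F = assms(1)
  define k where "k = m - 1"
  have mk: "m = Suc k" using assms(2) by (simp add: k_def)
  define D where "D i = ext_degree F (L i)" for i
  define e where "e i = n div D i" for i
  have Li: "is_subfield (L i)" "F \<subseteq> L i" if "i < m" for i using assms(3) that by auto
  have \<alpha>: "\<alpha> j \<in> F" "\<alpha> j \<noteq> 0" if "j < k" for j using assms(4) that by (auto simp: k_def)
  have "\<forall>i<m. \<exists>bs. is_basis F (L i) bs" using assms(3) unfolding finite_ext_def by blast
  then obtain BS where BS: "\<forall>i<m. is_basis F (L i) (BS i)" by metis
  have DBS: "D i = length (BS i)" if "i < m" for i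
    using ext_degree_eq[OF F] BS that by (simp add: D_def)
  have Dpos: "D i > 0" if i: "i < m" for i
  proof (rule ccontr)
    assume "\<not> D i > 0"
    hence "BS i = []" using DBS[OF i] by simp
    moreover have "1 \<in> L i" using Li[OF i] subf_simps(2) by blast
    ultimately show False using BS i unfolding is_basis_def by force
  qed
  have ed: "e i * D i = n" if "i < m" for i
  proof -
    have "D i dvd n" unfolding n_def D_def using that by (intro dvd_Lcm) auto
    thus ?thesis by (simp add: e_def)
  qed
  have edk: "\<forall>i\<le>k. e i * D i = n" using ed mk by auto
  have normF: "field_norm F (L i) c = c ^ D i" if "i < m" "c \<in> F" for i c
    using norm_const[OF F BS[rule_format, OF that(1)] that(2)] DBS[OF that(1)] by simp
  have RF: "is_subfield (ratext F F)" by (rule ratext_subfield[OF F])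
  have normR: "field_norm (ratext F F) (ratext F (L i)) c = c ^ D i" if "i < m" "c \<in> ratext F F" for i c
    using norm_const[OF RF ratext_basis[OF F Li(1)[OF that(1)] Li(2)[OF that(1)] BS[rule_format, OF that(1)]] that(2)]
      DBS[OF that(1)] by simp
  define X where "X i = (if i < m - 1 then \<alpha> i ^ (n div ext_degree F (L i))
             else if i = m - 1 then inverse (\<Prod>j<m - 1. \<alpha> j ^ (n div ext_degree F (L (m - 1))))
             else 1)" for i
  have X: "X i = (if i < k then \<alpha> i ^ e i else if i = k then inverse (\<Prod>j<k. \<alpha> j ^ e k) else 1)" for i
    unfolding X_def k_def e_def D_def by simp
  have XF: "X i \<in> F" "X i \<noteq> 0" if "i < m" for i
    using that \<alpha> mk by (auto simp: X subf_power[OF F] subf_inv[OF F] subf_prod[OF F])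
  have tor: "X \<in> torus_pts F L m"
    unfolding torus_pts_def
  proof (intro CollectI conjI allI impI)
    fix i assume i: "i < m"
    show "X i \<in> L i" using XF[OF i] Li[OF i] by auto
    show "X i \<noteq> 0" by (rule XF(2)[OF i])
  next
    fix i assume "m \<le> i" thus "X i = 1" using mk by (simp add: X)
  next
    have "(\<Prod>i<m. field_norm F (L i) (X i)) = (\<Prod>i<m. X i ^ D i)"
      using normF XF by (intro prod.cong) auto
    also have "\<dots> = (\<Prod>i<k. (\<alpha> i ^ e i) ^ D i) * (inverse (\<Prod>j<k. \<alpha> j ^ e k)) ^ D k"
      unfolding mk prod.lessThan_Suc by (simp add: X)
    also have "\<dots> = 1" using prod_cancel[of k \<alpha> e D n] \<alpha> edk by simp
    finally show "(\<Prod>i<m. field_norm F (L i) (X i)) = 1" .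
  qed
  define g where "g j = [:1, \<alpha> j - 1:]" for j
  define q where "q = (\<Prod>j<k. g j ^ e k)"
  define P where "P i = (if i < k then g i ^ e i * q else 1)" for i
  have g0: "poly (g j) 0 = 1" "poly (g j) 1 = \<alpha> j" for j by (simp_all add: g_def)
  have gne: "g j \<noteq> 0" for j by (simp add: g_def)
  have gF: "pc F (g j)" if "j < k" for j
    unfolding g_def using \<alpha>[OF that] F by (intro pc_lin subf_diff) (auto simp: subf_simps)
  have qF: "pc F q" unfolding q_def using gF by (intro pc_prod[OF F] ballI pc_power[OF F]) auto
  have PF: "pc F (P i)" for i unfolding P_def using gF qF by (auto intro: pc_mult[OF F] pc_power[OF F] pc_1[OF F])
  have q0: "poly q 0 = 1" by (simp add: q_def poly_prod g0)
  have q1: "poly q 1 = (\<Prod>j<k. \<alpha> j ^ e k)" by (simp add: q_def poly_prod g0)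
  have q1ne: "poly q 1 \<noteq> 0" using \<alpha> by (simp add: q1)
  have qne: "q \<noteq> 0" using q0 by auto
  have step: "R_step F L m (\<lambda>_. 1) X"
    unfolding R_step_def
  proof (intro exI[of _ P] exI[of _ q] conjI allI impI)
    fix i j assume im: "i < m"
    have "coeff (P i) j \<in> F" using PF by (simp add: pc_def)
    thus "coeff (P i) j \<in> L i" using Li(2)[OF im] by blast
  next
    fix j show "coeff q j \<in> F" using qF by (simp add: pc_def)
  next
    show "poly q 0 \<noteq> 0" using q0 by simp
    show "poly q 1 \<noteq> 0" by (rule q1ne)
  next
    fix i assume "i < m"
    show "1 = poly (P i) 0 / poly q 0" by (simp add: P_def q0 g0)
    show "X i = poly (P i) 1 / poly q 1" using q1ne \<open>i < m\<close> mk
      by (auto simp: P_def X g0 q1 divide_inverse)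
  next
    fix i assume "m \<le> i" thus "X i = 1" using mk by (simp add: X)
  next
    fix i :: nat assume "m \<le> i" show "(1::'k) = 1" by simp
  next
    have inR: "Fract (P i) q \<in> ratext F F" for i unfolding ratext_iff using PF qF qne by blast
    have "(\<Prod>i<m. field_norm (ratext F F) (ratext F (L i)) (Fract (P i) q)) = (\<Prod>i<m. Fract (P i) q ^ D i)"
      using normR inR by (intro prod.cong) auto
    also have "\<dots> = (\<Prod>i<k. (Fract (g i) 1 ^ e i) ^ D i) * (inverse (\<Prod>j<k. Fract (g j) 1 ^ e k)) ^ D k"
    proof -
      have "Fract (P i) q = Fract (g i) 1 ^ e i" if "i < k" for i
        using that qne by (simp add: P_def fract_cancel_right fract_power)
      moreover have "Fract (P k) q = inverse (\<Prod>j<k. Fract (g j) 1 ^ e k)"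
      proof -
        have "inverse (\<Prod>j<k. Fract (g j) 1 ^ e k) = inverse (Fract q 1)"
          by (simp only: q_def fract_prod fract_power)
        thus ?thesis by (simp add: P_def)
      qed
      ultimately show ?thesis unfolding mk prod.lessThan_Suc by simp
    qed
    also have "\<dots> = 1"
      using prod_cancel[of k "\<lambda>j. Fract (g j) 1" e D n] edk gne by (simp add: fract_eq_0)
    finally show "(\<Prod>i<m. field_norm (ratext F F) (ratext F (L i)) (Fract (P i) q)) = 1" .
  qed
  have "X \<in> RT_pts F L m"
    unfolding RT_pts_def using tor r_into_equivclp'[of "R_step F L m", OF step] by simp
  thus ?thesis unfolding X_def .
qed

end
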